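(* Let $P$ be a finite graded poset with a unique minimum $\hat{0}$ and a unique maximum $\hat{1}$, endowed with its rank function $\operatorname{rk}$, and let $H=\operatorname{rk}(\hat{1})$. Let $X_P(y)=\sum_{p\in P}\mu(\hat{0},p)\,y^{H-\operatorname{rk}(p)}$ be the characteristic polynomial of $P$, where $\mu$ is the Möbius function of $P$. Then no coefficient of the $q$-Zeta polynomial $\mathsf{Z}_{P,\operatorname{rk}}(x)\in\mathbb{Q}(q)[x]$ has a pole at $q=0$, and the polynomial $\mathsf{Z}_{P,\operatorname{rk}}|_{q=0}(x)$ obtained by setting $q=0$ in its coefficients satisfies $$\mathsf{Z}_{P,\operatorname{rk}}|_{q=0}(1-y)=y^{H}X_P(1/y).$$
   Context: $q$ is an indeterminate; for $n\in\mathbb{Z}$, $[n]_q=(q^n-1)/(q-1)$, and $[n]!_q=[1]_q[2]_q\cdots[n]_q$ for $n\ge 0$. For a finite poset $P$, a height function is a map $h:P\to\mathbb{N}$ with $h(x)<h(y)$ whenever $y$ covers $x$. A poset is graded if it has a height function increasing by exactly $1$ along every cover relation; $\operatorname{rk}$ denotes such a height function with minimum value $0$ on each connected component. For $k\ge1$, $\operatorname{Ch}_k(P)$ is the set of strict chains $c_1<\cdots<c_k$ in $P$. For a tuple $a=(a_1,\dots,a_k)$ of distinct nonnegative integers, $\mathsf{E}_a\in\mathbb{Q}(q)[x]$ is the unique polynomial with $\mathsf{E}_a([n]_q)=\sum_{m\in\mathbb{N}^k,\ m_1+\cdots+m_k=n}q^{a_1m_1+\cdots+a_km_k}$ for all $n\ge0$.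 The $q$-Zeta polynomial of $(P,h)$ is $$\mathsf{Z}_{P,h}(x)=\sum_{k\ge1}\sum_{c\in\operatorname{Ch}_k(P)}q^{h(c_1)+\cdots+h(c_k)}\,\mathsf{E}_{(h(c_1),\dots,h(c_k))}\!\left(\frac{x-[k+1]_q}{q^{k+1}}\right)\in\mathbb{Q}(q)[x];$$ it is the unique polynomial such that $\mathsf{Z}_{P,h}([n]_q)=\sum_{e_1\le e_2\le\cdots\le e_{n-1}\text{ in }P}q^{h(e_1)+\cdots+h(e_{n-1})}$ for all integers $n\ge2$. *)

theory Defs
  imports "HOL-Computational_Algebra.Polynomial" "HOL-Computational_Algebra.Fraction_Field"
begin

type_synonym qfield = "rat poly fract"

definition qvar :: qfield where
  "qvar = Fract [:0, 1:] 1"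

definition qint :: "nat \<Rightarrow> qfield" where
  "qint n = (qvar ^ n - 1) / (qvar - 1)"

definition covers :: "'a::order \<Rightarrow> 'a \<Rightarrow> bool" where
  "covers x y \<longleftrightarrow> x < y \<and> \<not> (\<exists>z. x < z \<and> z < y)"

definition multichain_sum :: "('a::{finite,order} \<Rightarrow> nat) \<Rightarrow> nat \<Rightarrow> qfield" where
  "multichain_sum h m =
     (\<Sum>es \<in> {es. length es = m \<and> (\<forall>i. Suc i < length es \<longrightarrow> es ! i \<le> es ! Suc i)}.
        qvar ^ sum_list (map h es))"

definition qZeta :: "('a::{finite,order} \<Rightarrow> nat) \<Rightarrow> qfield poly" where
  "qZeta h = (THE Z. \<forall>n\<ge>2. poly Z (qint n) = multichain_sum h (n - 1))"

definition regular_at_0 :: "qfield \<Rightarrow> bool" where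
  "regular_at_0 r \<longleftrightarrow> (\<exists>a b. poly b 0 \<noteq> 0 \<and> r = Fract a b)"

definition eval_at_0 :: "qfield \<Rightarrow> rat" where
  "eval_at_0 r = (THE c. \<exists>a b. poly b 0 \<noteq> 0 \<and> r = Fract a b \<and> c = poly a 0 / poly b 0)"

definition mobius :: "'a::{finite,order} \<Rightarrow> 'a \<Rightarrow> int" where
  "mobius = (THE m. \<forall>x y. m x y =
      (if x \<le> y then (if x = y then 1 else - (\<Sum>z\<in>{z. x \<le> z \<and> z < y}. m x z)) else 0))"

definition char_poly :: "'a::{finite,order} \<Rightarrow> 'a \<Rightarrow> ('a \<Rightarrow> nat) \<Rightarrow> rat poly" where
  "char_poly b0 b1 rk = (\<Sum>p\<in>UNIV. monom (of_int (mobius b0 p)) (rk b1 - rk p))"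

end

theory Submission
  imports Defs
begin


abbreviation reg where "reg \<equiv> regular_at_0"
abbreviation ev where "ev \<equiv> eval_at_0"

lemma ev_Fract: assumes "poly b 0 \<noteq> 0" shows "ev (Fract a b) = poly a 0 / poly b 0"
  unfolding eval_at_0_def
proof (rule the_equality)
  show "\<exists>a' b'. poly b' 0 \<noteq> 0 \<and> Fract a b = Fract a' b' \<and> poly a 0 / poly b 0 = poly a' 0 / poly b' 0"
    using assms by blast
next
  fix c assume "\<exists>a' b'. poly b' 0 \<noteq> 0 \<and> Fract a b = Fract a' b' \<and> c = poly a' 0 / poly b' 0"
  then obtain a' b' where h: "poly b' 0 \<noteq> 0" "Fract a b = Fract a' b'" "c = poly a' 0 / poly b' 0" by blast
  have "b \<noteq> 0" "b' \<noteq> 0" using assms h(1) by auto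
  then have "a * b' = a' * b" using h(2) eq_fract(1) by metis
  then have "poly (a * b') 0 = poly (a' * b) 0" by simp
  then have "poly a 0 * poly b' 0 = poly a' 0 * poly b 0" by simp
  moreover have "poly a' 0 = c * poly b' 0" using h(1,3) by simp
  ultimately have "poly a 0 * poly b' 0 = (c * poly b 0) * poly b' 0" by (simp add: algebra_simps)
  then have "poly a 0 = c * poly b 0" using h(1) by simp
  then show "c = poly a 0 / poly b 0" using assms by (simp add: field_simps)
qed

lemma reg_Fract: "poly b 0 \<noteq> 0 \<Longrightarrow> reg (Fract a b)"
  unfolding regular_at_0_def by blast

lemma reg_E: assumes "reg r" obtains a b where "poly b 0 \<noteq> 0" "r = Fract a b" "ev r = poly a 0 / poly b 0"
  using assms ev_Fract unfolding regular_at_0_def by blast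

lemma reg_add: assumes "reg r" "reg s" shows "reg (r + s) \<and> ev (r + s) = ev r + ev s"
proof -
  obtain a b where 1: "poly b 0 \<noteq> 0" "r = Fract a b" "ev r = poly a 0 / poly b 0" using reg_E assms(1) by blast
  obtain c d where 2: "poly d 0 \<noteq> 0" "s = Fract c d" "ev s = poly c 0 / poly d 0" using reg_E assms(2) by blast
  have "b \<noteq> 0" "d \<noteq> 0" using 1 2 by auto
  then have e: "r + s = Fract (a * d + c * b) (b * d)" using 1 2 by simp
  have p: "poly (b * d) 0 \<noteq> 0" using 1 2 by simp
  show ?thesis using e p 1 2 by (auto simp: ev_Fract field_simps reg_Fract)
qed

lemma reg_mult: assumes "reg r" "reg s" shows "reg (r * s) \<and> ev (r * s) = ev r * ev s"
proof -
  obtain a b where 1: "poly b 0 \<noteq> 0" "r = Fract a b" "ev r = poly a 0 / poly b 0" using reg_E assms(1) by blast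
  obtain c d where 2: "poly d 0 \<noteq> 0" "s = Fract c d" "ev s = poly c 0 / poly d 0" using reg_E assms(2) by blast
  have e: "r * s = Fract (a * c) (b * d)" using 1 2 by simp
  have p: "poly (b * d) 0 \<noteq> 0" using 1 2 by simp
  show ?thesis using e p 1 2 by (auto simp: ev_Fract field_simps reg_Fract)
qed

lemma reg_minus: assumes "reg r" shows "reg (- r) \<and> ev (- r) = - ev r"
proof -
  obtain a b where 1: "poly b 0 \<noteq> 0" "r = Fract a b" "ev r = poly a 0 / poly b 0" using reg_E assms(1) by blast
  have e: "- r = Fract (- a) b" using 1 by simp
  show ?thesis using e 1 by (auto simp: ev_Fract field_simps reg_Fract)
qed

lemma reg_diff: assumes "reg r" "reg s" shows "reg (r - s) \<and> ev (r - s) = ev r - ev s"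
  using reg_add[OF assms(1) reg_minus[OF assms(2), THEN conjunct1]] reg_minus[OF assms(2)] by simp

lemma reg_inverse: assumes "reg r" "ev r \<noteq> 0" shows "reg (inverse r) \<and> ev (inverse r) = inverse (ev r)"
proof -
  obtain a b where 1: "poly b 0 \<noteq> 0" "r = Fract a b" "ev r = poly a 0 / poly b 0" using reg_E assms(1) by blast
  have a0: "poly a 0 \<noteq> 0" using 1 assms(2) by auto
  have e: "inverse r = Fract b a" using 1 by simp
  show ?thesis using e 1 a0 by (auto simp: ev_Fract field_simps reg_Fract)
qed

lemma reg_const: "reg (Fract [:c:] 1) \<and> ev (Fract [:c:] 1) = c"
  by (auto simp: ev_Fract reg_Fract)

lemma reg_0: "reg 0 \<and> ev 0 = 0"
  using reg_const[of 0] by (simp add: fract_collapse)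

lemma reg_1: "reg 1 \<and> ev 1 = 1"
  using reg_const[of 1] by (simp add: fract_collapse one_pCons[symmetric])

lemma reg_of_nat: "reg (of_nat n) \<and> ev (of_nat n) = of_nat n"
proof -
  have "of_nat n = Fract [:of_nat n:] 1" by (simp add: of_nat_fract of_nat_poly)
  then show ?thesis using reg_const by metis
qed

lemma reg_qvar: "reg qvar \<and> ev qvar = 0"
  unfolding qvar_def by (auto simp: ev_Fract reg_Fract)

lemma reg_power: assumes "reg r" shows "reg (r ^ n) \<and> ev (r ^ n) = ev r ^ n"
  by (induction n) (auto simp: reg_1 reg_mult assms)

lemma reg_sum: assumes "\<And>x. x \<in> A \<Longrightarrow> reg (f x)" shows "reg (sum f A) \<and> ev (sum f A) = (\<Sum>x\<in>A. ev (f x))"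
  using assms by (induction A rule: infinite_finite_induct) (auto simp: reg_0 reg_add)



lemma card_gt_less: fixes x z :: "'a::{finite,order}" assumes "x < z" shows "card {v. z < v} < card {v. x < v}"
  by (rule psubset_card_mono) (use assms in auto)

lemma card_lt_less: fixes x z :: "'a::{finite,order}" assumes "z < y" shows "card {v. v < z} < card {v. v < y}"
  by (rule psubset_card_mono) (use assms in auto)

function phi :: "('a::{finite,order} \<Rightarrow> nat) \<Rightarrow> 'a \<Rightarrow> 'a \<Rightarrow> qfield" where
  "phi rk w x = (if x < w then (\<Sum>z\<in>{z. x < z \<and> z \<le> w}. phi rk w z) / (qvar ^ (rk w - rk x) - 1)
                 else if x = w then 1 else 0)"
  by auto
termination by (relation "measure (\<lambda>(rk,w,x). card {v. x < v})") (auto intro: card_gt_less)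

declare phi.simps[simp del]

function Ef :: "('a::{finite,order} \<Rightarrow> nat) \<Rightarrow> 'a \<Rightarrow> qfield" where
  "Ef rk x = 1 - (\<Sum>w\<in>{w. x < w}. Ef rk w * qvar ^ (rk w - rk x) * phi rk w x)"
  by auto
termination by (relation "measure (\<lambda>(rk,x). card {v. x < v})") (auto intro: card_gt_less)

declare Ef.simps[simp del]

function mob :: "'a::{finite,order} \<Rightarrow> 'a \<Rightarrow> int" where
  "mob x y = (if x \<le> y then (if x = y then 1 else - (\<Sum>z\<in>{z. x \<le> z \<and> z < y}. mob x z)) else 0)"
  by auto
termination by (relation "measure (\<lambda>(x,y). card {v. v < y})") (auto intro: card_lt_less)

declare mob.simps[simp del]

lemma mobius_eq: "mobius = mob"
  unfolding mobius_def
proof (rule the_equality)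
  show "\<forall>x y. mob x y = (if x \<le> y then (if x = y then 1 else - (\<Sum>z\<in>{z. x \<le> z \<and> z < y}. mob x z)) else 0)"
    by (metis mob.simps)
next
  fix m :: "'a \<Rightarrow> 'a \<Rightarrow> int"
  assume m: "\<forall>x y. m x y = (if x \<le> y then (if x = y then 1 else - (\<Sum>z\<in>{z. x \<le> z \<and> z < y}. m x z)) else 0)"
  have "m x y = mob x y" for x y
  proof (induction y rule: measure_induct_rule[where f = "\<lambda>y. card {v. v < y}"])
    case (less y)
    have "m x y = (if x \<le> y then (if x = y then 1 else - (\<Sum>z\<in>{z. x \<le> z \<and> z < y}. m x z)) else 0)"
      using m by blast
    also have "\<dots> = (if x \<le> y then (if x = y then 1 else - (\<Sum>z\<in>{z. x \<le> z \<and> z < y}. mob x z)) else 0)"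
      using less card_lt_less by (intro if_cong refl arg_cong[where f=uminus] sum.cong) auto
    also have "\<dots> = mob x y" by (metis mob.simps)
    finally show ?case .
  qed
  then show "m = mob" by blast
qed

lemma qpow: "qvar ^ k = Fract (monom 1 k) 1"
  by (induction k) (auto simp: qvar_def fract_collapse monom_Suc)

lemma qpow_inj: "qvar ^ a = qvar ^ b \<Longrightarrow> a = b"
  unfolding qpow by (auto simp: eq_fract monom_eq_iff')

lemma qpow_ne1: "k > 0 \<Longrightarrow> qvar ^ k - 1 \<noteq> 0"
  using qpow_inj[of k 0] by auto

lemma reg_qpow: "reg (qvar ^ k) \<and> ev (qvar ^ k) = (if k = 0 then 1 else 0)"
  using reg_power[OF reg_qvar[THEN conjunct1], of k] reg_qvar by (auto simp: zero_power)

lemma reg_qpowm1: "k > 0 \<Longrightarrow> reg (inverse (qvar ^ k - 1)) \<and> ev (inverse (qvar ^ k - 1)) = -1"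
  using reg_inverse[of "qvar ^ k - 1"] reg_diff[OF reg_qpow[THEN conjunct1] reg_1[THEN conjunct1], of k]
    reg_qpow[of k] reg_1 by auto



lemma sum_filt: "(\<Sum>x\<in>{x::'a::finite. P x}. f x) = (\<Sum>x\<in>UNIV. if P x then f x else 0)"
  using sum.inter_filter[of UNIV f P] by simp

locale graded =
  fixes rk :: "'a::{finite,order} \<Rightarrow> nat"
  assumes mono: "x < y \<Longrightarrow> rk x < rk y"
begin

lemma mono_le: "x \<le> y \<Longrightarrow> rk x \<le> rk y"
  using mono[of x y] by (metis order_le_less less_imp_le_nat order_refl)

lemma phi_rec: assumes "x < w"
  shows "phi rk w x * (qvar ^ (rk w - rk x) - 1) = (\<Sum>z\<in>{z. x < z \<and> z \<le> w}. phi rk w z)"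
proof -
  have "qvar ^ (rk w - rk x) - 1 \<noteq> 0" using qpow_ne1 mono[OF assms] by simp
  then show ?thesis using assms by (subst phi.simps) simp
qed

lemma phi_self: "phi rk w w = 1" by (subst phi.simps) simp

lemma phi_reg: "reg (phi rk w x) \<and> ev (phi rk w x) =
   (if x < w then - (\<Sum>z\<in>{z. x < z \<and> z \<le> w}. ev (phi rk w z)) else if x = w then 1 else 0)"
proof (induction x rule: measure_induct_rule[where f = "\<lambda>x. card {v. x < v}"])
  case (less x)
  show ?case
  proof (cases "x < w")
    case True
    have IH: "\<And>z. z \<in> {z. x < z \<and> z \<le> w} \<Longrightarrow> reg (phi rk w z)" using less card_gt_less by auto
    have S: "reg (\<Sum>z\<in>{z. x < z \<and> z \<le> w}. phi rk w z) \<and> ev (\<Sum>z\<in>{z. x < z \<and> z \<le> w}. phi rk w z) = (\<Sum>z\<in>{z. x < z \<and> z \<le> w}. ev (phi rk w z))"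
      by (rule reg_sum) (use IH in auto)
    have k: "rk w - rk x > 0" using mono[OF True] by simp
    have e: "phi rk w x = (\<Sum>z\<in>{z. x < z \<and> z \<le> w}. phi rk w z) * inverse (qvar ^ (rk w - rk x) - 1)"
      using True by (subst phi.simps) (simp add: divide_inverse)
    show ?thesis using reg_mult[OF S[THEN conjunct1] reg_qpowm1[OF k, THEN conjunct1]] S reg_qpowm1[OF k] True
      unfolding e[symmetric] by simp
  next
    case False
    have e: "phi rk w x = (if x = w then 1 else 0)" using False by (subst phi.simps) simp
    show ?thesis using reg_0 reg_1 False by (simp add: e)
  qed
qed

lemma Ef_reg: "reg (Ef rk x) \<and> ev (Ef rk x) = 1"
proof (induction x rule: measure_induct_rule[where f = "\<lambda>x. card {v. x < v}"])
  case (less x)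
  have t: "reg (Ef rk w * qvar ^ (rk w - rk x) * phi rk w x) \<and> ev (Ef rk w * qvar ^ (rk w - rk x) * phi rk w x) = 0"
    if "w \<in> {w. x < w}" for w
  proof -
    have "reg (Ef rk w)" using less card_gt_less that by auto
    moreover have "rk w - rk x \<noteq> 0" using mono that by fastforce
    ultimately show ?thesis using reg_mult reg_qpow[of "rk w - rk x"] phi_reg[of w x] by auto
  qed
  have S: "reg (\<Sum>w\<in>{w. x < w}. Ef rk w * qvar ^ (rk w - rk x) * phi rk w x) \<and>
      ev (\<Sum>w\<in>{w. x < w}. Ef rk w * qvar ^ (rk w - rk x) * phi rk w x) = 0"
    using reg_sum[of "{w. x < w}"] t by simp
  have e: "Ef rk x = 1 - (\<Sum>w\<in>{w. x < w}. Ef rk w * qvar ^ (rk w - rk x) * phi rk w x)" by (rule Ef.simps)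
  show ?case using reg_diff[OF reg_1[THEN conjunct1] S[THEN conjunct1]] S reg_1
    by (simp only: e) simp
qed

definition ee :: "'a \<Rightarrow> 'a \<Rightarrow> qfield" where
  "ee x w = Ef rk w * qvar ^ (rk w - rk x) * phi rk w x"

lemma ee_sum: "(\<Sum>w\<in>{w. x \<le> w}. ee x w) = 1"
proof -
  have "{w. x \<le> w} = insert x {w. x < w}" by auto
  then have "(\<Sum>w\<in>{w. x \<le> w}. ee x w) = ee x x + (\<Sum>w\<in>{w. x < w}. ee x w)" by simp
  also have "ee x x = Ef rk x" by (simp add: ee_def phi_self)
  also have "\<dots> = 1 - (\<Sum>w\<in>{w. x < w}. ee x w)" by (subst Ef.simps) (simp add: ee_def)
  finally show ?thesis by simp
qed

lemma ee_rec: assumes "x \<le> w"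
  shows "ee x w * qvar ^ rk w = (\<Sum>z\<in>{z. x \<le> z \<and> z \<le> w}. qvar ^ rk z * ee z w)"
proof (cases "x = w")
  case True
  then have "{z. x \<le> z \<and> z \<le> w} = {w}" by auto
  then show ?thesis using True by (simp add: mult.commute)
next
  case False
  then have lt: "x < w" using assms by simp
  have split: "{z. x \<le> z \<and> z \<le> w} = insert x {z. x < z \<and> z \<le> w}" using assms by auto
  have pw: "qvar ^ rk z * qvar ^ (rk w - rk z) = qvar ^ rk w" if "z \<le> w" for z
    using mono_le[OF that] by (simp add: power_add[symmetric])
  have "(\<Sum>z\<in>{z. x < z \<and> z \<le> w}. qvar ^ rk z * ee z w) = (\<Sum>z\<in>{z. x < z \<and> z \<le> w}. Ef rk w * qvar ^ rk w * phi rk w z)"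
    by (rule sum.cong) (auto simp: ee_def pw[symmetric] algebra_simps)
  also have "\<dots> = Ef rk w * qvar ^ rk w * (\<Sum>z\<in>{z. x < z \<and> z \<le> w}. phi rk w z)" by (simp add: sum_distrib_left)
  also have "\<dots> = Ef rk w * qvar ^ rk w * (phi rk w x * (qvar ^ (rk w - rk x) - 1))" using phi_rec[OF lt] by simp
  also have "\<dots> = ee x w * qvar ^ rk w - qvar ^ rk x * ee x w"
    using pw[of x] assms by (simp add: ee_def algebra_simps)
  finally show ?thesis unfolding split by simp
qed

lemma ev_phi_top: assumes "x \<le> y" shows "(\<Sum>z\<in>{z. x \<le> z \<and> z \<le> y}. ev (phi rk y z)) = (if x = y then 1 else 0)"
proof (cases "x = y")
  case True
  then have "{z. x \<le> z \<and> z \<le> y} = {y}" by auto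
  then show ?thesis using True phi_reg[of y y] by simp
next
  case False
  then have lt: "x < y" using assms by simp
  have split: "{z. x \<le> z \<and> z \<le> y} = insert x {z. x < z \<and> z \<le> y}" using assms by auto
  show ?thesis unfolding split using phi_reg[of y x] lt False by simp
qed

lemma mob_bot: assumes "x \<le> y" shows "(\<Sum>z\<in>{z. x \<le> z \<and> z \<le> y}. mob x z) = (if x = y then 1 else 0)"
proof (cases "x = y")
  case True
  then have "{z. x \<le> z \<and> z \<le> y} = {y}" by auto
  then show ?thesis using True by (simp add: mob.simps)
next
  case False
  have split: "{z. x \<le> z \<and> z \<le> y} = insert y {z. x \<le> z \<and> z < y}" using assms by auto
  have e: "mob x y = - (\<Sum>z\<in>{z. x \<le> z \<and> z < y}. mob x z)" using False assms by (subst mob.simps) simp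
  show ?thesis unfolding split using False e by simp
qed

lemma ev_phi_mob: assumes "x \<le> y" shows "ev (phi rk y x) = of_int (mob x y)"
proof -
  define nu where "nu t = ev (phi rk y t)" for t
  define I where "I = {z. x \<le> z \<and> z \<le> y}"
  have yI: "y \<in> I" using assms by (simp add: I_def)
  have "(of_int (mob x y) :: rat) = (\<Sum>z\<in>I. if z = y then of_int (mob x z) else 0)"
    using yI by (simp add: sum.delta)
  also have "\<dots> = (\<Sum>z\<in>I. of_int (mob x z) * (\<Sum>t\<in>{t \<in> I. z \<le> t}. nu t))"
  proof (rule sum.cong[OF refl])
    fix z assume z: "z \<in> I"
    have "{t \<in> I. z \<le> t} = {t. z \<le> t \<and> t \<le> y}" using z by (auto simp: I_def intro: order_trans)
    then show "(if z = y then of_int (mob x z) else 0) = of_int (mob x z) * (\<Sum>t\<in>{t \<in> I. z \<le> t}. nu t)"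
      using ev_phi_top[of z y] z by (simp add: I_def nu_def)
  qed
  also have "\<dots> = (\<Sum>z\<in>I. \<Sum>t\<in>{t \<in> I. z \<le> t}. of_int (mob x z) * nu t)"
    by (simp add: sum_distrib_left)
  also have "\<dots> = (\<Sum>t\<in>I. \<Sum>z\<in>{z \<in> I. z \<le> t}. of_int (mob x z) * nu t)"
    by (rule sum.swap_restrict) auto
  also have "\<dots> = (\<Sum>t\<in>I. nu t * (if x = t then 1 else 0))"
  proof (rule sum.cong[OF refl])
    fix t assume t: "t \<in> I"
    have "{z \<in> I. z \<le> t} = {z. x \<le> z \<and> z \<le> t}" using t by (auto simp: I_def intro: order_trans)
    then have "(\<Sum>z\<in>{z \<in> I. z \<le> t}. of_int (mob x z) * nu t) = nu t * of_int (\<Sum>z\<in>{z. x \<le> z \<and> z \<le> t}. mob x z)"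
      by (simp add: sum_distrib_left mult.commute)
    also have "\<dots> = nu t * (if x = t then 1 else 0)" using mob_bot[of x t] t by (simp add: I_def)
    finally show "(\<Sum>z\<in>{z \<in> I. z \<le> t}. of_int (mob x z) * nu t) = nu t * (if x = t then 1 else 0)" .
  qed
  also have "\<dots> = nu x" using assms by (simp add: I_def sum.delta' if_distrib cong: if_cong)
  finally show ?thesis by (simp add: nu_def)
qed

end



definition sortedc :: "'a::order list \<Rightarrow> bool" where
  "sortedc es \<longleftrightarrow> (\<forall>i. Suc i < length es \<longrightarrow> es ! i \<le> es ! Suc i)"

definition SS :: "'a::{finite,order} \<Rightarrow> nat \<Rightarrow> 'a list set" where
  "SS x m = {es. length es = m \<and> sortedc es \<and> (es \<noteq> [] \<longrightarrow> x \<le> hd es)}"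

lemma finite_len: "finite {es :: 'a::finite list. length es = m}"
  using finite_lists_length_le[of "UNIV :: 'a set" m] by (rule finite_subset[rotated]) auto

lemma finite_SS: "finite (SS x m)"
  by (rule finite_subset[OF _ finite_len[of m]]) (auto simp: SS_def)

lemma sortedc_Cons: "sortedc (z # es) \<longleftrightarrow> sortedc es \<and> (es \<noteq> [] \<longrightarrow> z \<le> hd es)"
proof
  assume a: "sortedc (z # es)"
  have "sortedc es" unfolding sortedc_def
  proof (intro allI impI)
    fix i assume "Suc i < length es"
    then show "es ! i \<le> es ! Suc i" using a[unfolded sortedc_def, rule_format, of "Suc i"] by simp
  qed
  moreover have "es \<noteq> [] \<longrightarrow> z \<le> hd es"
    using a[unfolded sortedc_def, rule_format, of 0] by (cases es) auto
  ultimately show "sortedc es \<and> (es \<noteq> [] \<longrightarrow> z \<le> hd es)" by blast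
next
  assume a: "sortedc es \<and> (es \<noteq> [] \<longrightarrow> z \<le> hd es)"
  show "sortedc (z # es)" unfolding sortedc_def
  proof (intro allI impI)
    fix i assume i: "Suc i < length (z # es)"
    show "(z # es) ! i \<le> (z # es) ! Suc i"
    proof (cases i)
      case 0 then show ?thesis using a i by (cases es) auto
    next
      case (Suc j) then show ?thesis using a i by (auto simp: sortedc_def)
    qed
  qed
qed

lemma SS_Suc: "SS x (Suc m) = (\<lambda>(z, es). z # es) ` (SIGMA z:{z. x \<le> z}. SS z m)"
proof (intro equalityI subsetI)
  fix es assume "es \<in> SS x (Suc m)"
  then obtain z t where es: "es = z # t" "length t = m" "sortedc (z # t)" "x \<le> z"
    by (cases es) (auto simp: SS_def)
  then show "es \<in> (\<lambda>(z, es). z # es) ` (SIGMA z:{z. x \<le> z}. SS z m)"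
    by (auto simp: SS_def sortedc_Cons intro!: image_eqI[of _ _ "(z, t)"])
next
  fix es assume "es \<in> (\<lambda>(z, es). z # es) ` (SIGMA z:{z. x \<le> z}. SS z m)"
  then obtain z t where "z \<in> {z. x \<le> z}" "t \<in> SS z m" "es = z # t" by auto
  then show "es \<in> SS x (Suc m)" by (auto simp: SS_def sortedc_Cons intro: order_trans)
qed

definition UU :: "('a::{finite,order} \<Rightarrow> nat) \<Rightarrow> 'a \<Rightarrow> nat \<Rightarrow> qfield" where
  "UU rk x m = (\<Sum>es\<in>SS x m. qvar ^ sum_list (map rk es))"

lemma UU_0: "UU rk x 0 = 1"
proof -
  have "SS x 0 = {[]}" by (auto simp: SS_def sortedc_def)
  then show ?thesis by (simp add: UU_def)
qed

lemma UU_Suc: "UU rk x (Suc m) = (\<Sum>z\<in>{z. x \<le> z}. qvar ^ rk z * UU rk z m)"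
proof -
  have inj: "inj_on (\<lambda>(z, es). z # es) (SIGMA z:{z. x \<le> z}. SS z m)" by (auto simp: inj_on_def)
  have "UU rk x (Suc m) = (\<Sum>p\<in>(SIGMA z:{z. x \<le> z}. SS z m). qvar ^ sum_list (map rk ((\<lambda>(z, es). z # es) p)))"
    unfolding UU_def SS_Suc by (rule sum.reindex[OF inj, unfolded comp_def])
  also have "\<dots> = (\<Sum>z\<in>{z. x \<le> z}. \<Sum>es\<in>SS z m. qvar ^ sum_list (map rk (z # es)))"
    by (subst sum.Sigma) (auto simp: finite_SS split_def)
  also have "\<dots> = (\<Sum>z\<in>{z. x \<le> z}. qvar ^ rk z * UU rk z m)"
    by (simp add: UU_def sum_distrib_left power_add)
  finally show ?thesis .
qed

lemma multichain_UU: fixes b0 :: "'a::{finite,order}" assumes "\<forall>p. b0 \<le> p"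
  shows "multichain_sum rk m = UU rk b0 m"
proof -
  have "{es. length es = m \<and> (\<forall>i. Suc i < length es \<longrightarrow> es ! i \<le> es ! Suc i)} = SS b0 m"
    using assms by (auto simp: SS_def sortedc_def)
  then show ?thesis by (simp add: multichain_sum_def UU_def)
qed

context graded begin

lemma UU_formula: "UU rk x m = (\<Sum>w\<in>{w. x \<le> w}. ee x w * qvar ^ (rk w * m))"
proof (induction m arbitrary: x)
  case 0
  then show ?case by (simp add: UU_0 ee_sum)
next
  case (Suc m)
  have "UU rk x (Suc m) = (\<Sum>z\<in>{z. x \<le> z}. \<Sum>w\<in>{w \<in> UNIV. z \<le> w}. qvar ^ rk z * ee z w * qvar ^ (rk w * m))"
    by (simp add: UU_Suc Suc sum_distrib_left mult.assoc)
  also have "\<dots> = (\<Sum>w\<in>UNIV. \<Sum>z\<in>{z \<in> {z. x \<le> z}. z \<le> w}. qvar ^ rk z * ee z w * qvar ^ (rk w * m))"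
    by (rule sum.swap_restrict) auto
  also have "\<dots> = (\<Sum>w\<in>UNIV. if x \<le> w then ee x w * qvar ^ (rk w * Suc m) else 0)"
  proof (rule sum.cong[OF refl])
    fix w
    show "(\<Sum>z\<in>{z \<in> {z. x \<le> z}. z \<le> w}. qvar ^ rk z * ee z w * qvar ^ (rk w * m)) =
          (if x \<le> w then ee x w * qvar ^ (rk w * Suc m) else 0)"
    proof (cases "x \<le> w")
      case True
      have "(\<Sum>z\<in>{z \<in> {z. x \<le> z}. z \<le> w}. qvar ^ rk z * ee z w * qvar ^ (rk w * m))
          = (\<Sum>z\<in>{z. x \<le> z \<and> z \<le> w}. qvar ^ rk z * ee z w) * qvar ^ (rk w * m)"
        by (simp add: sum_distrib_right)
      also have "\<dots> = ee x w * qvar ^ rk w * qvar ^ (rk w * m)" using ee_rec[OF True] by simp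
      finally show ?thesis using True by (simp add: power_add mult.assoc)
    next
      case False
      then have e: "{z \<in> {z. x \<le> z}. z \<le> w} = {}" by (auto intro: order_trans)
      show ?thesis using False unfolding e by simp
    qed
  qed
  also have "\<dots> = (\<Sum>w\<in>{w. x \<le> w}. ee x w * qvar ^ (rk w * Suc m))"
    by (simp only: sum_filt)
  finally show ?case .
qed

end



lemma qm1_ne: "qvar - 1 \<noteq> 0" using qpow_ne1[of 1] by simp

lemma qint_pow: "(qvar - 1) * qint n + 1 = qvar ^ n"
  using qm1_ne by (simp add: qint_def)

lemma qint_inj: "qint a = qint b \<Longrightarrow> a = b"
  using qint_pow[of a] qint_pow[of b] qpow_inj by metis

lemma poly_unique: fixes Z1 Z2 :: "qfield poly"
  assumes "\<forall>n\<ge>2. poly Z1 (qint n) = poly Z2 (qint n)" shows "Z1 = Z2"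
proof (rule ccontr)
  assume "Z1 \<noteq> Z2"
  then have "Z1 - Z2 \<noteq> 0" by simp
  then have fin: "finite {x. poly (Z1 - Z2) x = 0}" by (rule poly_roots_finite)
  have "qint ` {2..} \<subseteq> {x. poly (Z1 - Z2) x = 0}" using assms by auto
  then have "finite (qint ` {2..})" using fin finite_subset by blast
  moreover have "inj_on qint {2..}" using qint_inj by (auto simp: inj_on_def)
  ultimately have "finite {2::nat..}" using finite_imageD by blast
  then show False using infinite_Ici by blast
qed

lemma rank_mono:
  fixes rk :: "'a::{finite,order} \<Rightarrow> nat"
  assumes cov: "\<forall>x y. covers x y \<longrightarrow> rk y = rk x + 1"
  shows "x < y \<Longrightarrow> rk x < rk y"
proof (induction x rule: measure_induct_rule[where f = "\<lambda>x. card {v. x < v}"])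
  case (less x)
  let ?A = "{z. x < z \<and> z \<le> y}"
  have "finite ?A" "y \<in> ?A" using less by auto
  then obtain z where z0: "z \<in> ?A" "\<forall>b\<in>?A. b \<le> z \<longrightarrow> z = b"
    using finite_has_minimal[of ?A] by blast
  have z: "z \<in> ?A" "\<And>v. v \<in> ?A \<Longrightarrow> \<not> v < z"
    using z0 by (auto simp: less_le)
  have "covers x z" unfolding covers_def
  proof (intro conjI notI)
    show "x < z" using z by simp
    assume "\<exists>v. x < v \<and> v < z"
    then obtain v where "x < v" "v < z" by blast
    moreover have "v \<le> y" using \<open>v < z\<close> z(1) by auto
    ultimately show False using z(2)[of v] by simp
  qed
  then have rz: "rk z = rk x + 1" using cov by blast
  show ?case
  proof (cases "z = y")
    case True then show ?thesis using rz by simp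
  next
    case False
    then have "z < y" using z(1) by (simp add: less_le)
    then have "rk z < rk y" using less.IH[of z] card_gt_less[of x z] z by simp
    then show ?thesis using rz by simp
  qed
qed



theorem mainTheorem1:
  fixes b0 b1 :: "'a::{finite,order}" and rk :: "'a \<Rightarrow> nat"
  assumes "\<forall>p. b0 \<le> p" and "\<forall>p. p \<le> b1"
    and "rk b0 = 0" and "\<forall>x y. covers x y \<longrightarrow> rk y = rk x + 1"
  shows "(\<forall>i. regular_at_0 (coeff (qZeta rk) i)) \<and>
         (\<forall>y::rat. y \<noteq> 0 \<longrightarrow>
            poly (map_poly eval_at_0 (qZeta rk)) (1 - y) = y ^ rk b1 * poly (char_poly b0 b1 rk) (1 / y))"
proof -
  interpret graded rk using rank_mono[OF assms(4)] by unfold_locales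
  define c where "c w = Ef rk w * phi rk w b0" for w
  define Z where "Z = (\<Sum>w\<in>UNIV. \<Sum>i\<le>rk w. monom (c w * of_nat (rk w choose i) * (qvar - 1) ^ i) i)"
  have polyZ: "poly Z x = (\<Sum>w\<in>UNIV. c w * ((qvar - 1) * x + 1) ^ rk w)" for x
  proof -
    have "poly Z x = (\<Sum>w\<in>UNIV. \<Sum>i\<le>rk w. c w * (of_nat (rk w choose i) * ((qvar - 1) * x) ^ i * 1 ^ (rk w - i)))"
      unfolding Z_def poly_sum poly_monom by (simp add: power_mult_distrib mult_ac)
    also have "\<dots> = (\<Sum>w\<in>UNIV. c w * ((qvar - 1) * x + 1) ^ rk w)"
      by (simp only: binomial_ring sum_distrib_left)
    finally show ?thesis .
  qed
  have ms: "multichain_sum rk (n - 1) = (\<Sum>w\<in>UNIV. c w * qvar ^ (rk w * n))" if "n \<ge> 1" for n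
  proof -
    have U: "{w. b0 \<le> w} = UNIV" using assms(1) by auto
    have "multichain_sum rk (n - 1) = (\<Sum>w\<in>UNIV. ee b0 w * qvar ^ (rk w * (n - 1)))"
      using multichain_UU[OF assms(1)] UU_formula[of b0 "n - 1"] U by simp
    also have "\<dots> = (\<Sum>w\<in>UNIV. c w * qvar ^ (rk w * n))"
    proof (rule sum.cong[OF refl])
      fix w
      have "rk w + rk w * (n - 1) = rk w * n" using that by (cases n) auto
      then show "ee b0 w * qvar ^ (rk w * (n - 1)) = c w * qvar ^ (rk w * n)"
        by (simp add: ee_def c_def assms(3) power_add[symmetric] algebra_simps)
    qed
    finally show ?thesis .
  qed
  have ms2: "poly Z (qint n) = multichain_sum rk (n - 1)" if "n \<ge> 1" for n
  proof -
    have "poly Z (qint n) = (\<Sum>w\<in>UNIV. c w * (qvar ^ n) ^ rk w)" by (simp only: polyZ qint_pow)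
    also have "\<dots> = (\<Sum>w\<in>UNIV. c w * qvar ^ (rk w * n))" by (simp add: power_mult[symmetric] mult.commute)
    finally show ?thesis using ms[OF that] by simp
  qed
  have qZ: "qZeta rk = Z"
    unfolding qZeta_def
  proof (rule the_equality)
    show "\<forall>n\<ge>2. poly Z (qint n) = multichain_sum rk (n - 1)"
      using ms2 by simp
  next
    fix Z' assume "\<forall>n\<ge>2. poly Z' (qint n) = multichain_sum rk (n - 1)"
    then show "Z' = Z" using ms2 by (intro poly_unique) simp
  qed
  have coeffZ: "coeff Z j = (\<Sum>w\<in>UNIV. if j \<le> rk w then c w * of_nat (rk w choose j) * (qvar - 1) ^ j else 0)" for j
    by (simp add: Z_def coeff_sum coeff_monom sum.delta)
  have cw: "reg (c w) \<and> ev (c w) = of_int (mob b0 w)" for w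
    using reg_mult[OF Ef_reg[THEN conjunct1] phi_reg[THEN conjunct1], of w w b0] Ef_reg[of w]
      ev_phi_mob[of b0 w] assms(1) by (simp add: c_def)
  have qm: "reg ((qvar - 1) ^ j) \<and> ev ((qvar - 1) ^ j) = (-1) ^ j" for j
    using reg_power[OF reg_diff[OF reg_qvar[THEN conjunct1] reg_1[THEN conjunct1], THEN conjunct1], of j]
      reg_diff[OF reg_qvar[THEN conjunct1] reg_1[THEN conjunct1]] reg_qvar reg_1 by simp
  have trm: "reg (if j \<le> rk w then c w * of_nat (rk w choose j) * (qvar - 1) ^ j else 0) \<and>
     ev (if j \<le> rk w then c w * of_nat (rk w choose j) * (qvar - 1) ^ j else 0) =
     (if j \<le> rk w then of_int (mob b0 w) * of_nat (rk w choose j) * (-1) ^ j else 0)" for j w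
  proof -
    have a: "reg (c w * of_nat (rk w choose j)) \<and> ev (c w * of_nat (rk w choose j)) = of_int (mob b0 w) * of_nat (rk w choose j)"
      using reg_mult[OF cw[THEN conjunct1] reg_of_nat[THEN conjunct1]] cw[of w] reg_of_nat[of "rk w choose j"] by simp
    have b: "reg (c w * of_nat (rk w choose j) * (qvar - 1) ^ j) \<and> ev (c w * of_nat (rk w choose j) * (qvar - 1) ^ j) = of_int (mob b0 w) * of_nat (rk w choose j) * (-1) ^ j"
      using reg_mult[OF a[THEN conjunct1] qm[THEN conjunct1]] a qm[of j] by simp
    show ?thesis using b reg_0 by auto
  qed
  have cZ: "reg (coeff Z j) \<and> ev (coeff Z j) = (\<Sum>w\<in>UNIV. if j \<le> rk w then of_int (mob b0 w) * of_nat (rk w choose j) * (-1) ^ j else 0)" for j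
    unfolding coeffZ using reg_sum[of UNIV, OF trm[THEN conjunct1]] trm by simp
  define Z0 where "Z0 = (\<Sum>w\<in>UNIV. \<Sum>i\<le>rk w. monom (of_int (mob b0 w) * of_nat (rk w choose i) * (-1) ^ i :: rat) i)"
  have mZ: "map_poly ev Z = Z0"
  proof (rule poly_eqI)
    fix j
    have "coeff (map_poly ev Z) j = ev (coeff Z j)" using reg_0 by (simp add: coeff_map_poly)
    then show "coeff (map_poly ev Z) j = coeff Z0 j" using cZ[of j] by (simp add: Z0_def coeff_sum coeff_monom sum.delta)
  qed
  have pZ0: "poly Z0 (1 - y) = (\<Sum>w\<in>UNIV. of_int (mob b0 w) * y ^ rk w)" for y
  proof -
    have "poly Z0 (1 - y) = (\<Sum>w\<in>UNIV. \<Sum>i\<le>rk w. of_int (mob b0 w) * (of_nat (rk w choose i) * (- (1 - y)) ^ i * 1 ^ (rk w - i)))"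
      unfolding Z0_def poly_sum poly_monom
      by (intro sum.cong refl) (simp add: power_mult_distrib[of "-1" "1 - y", symmetric, simplified] mult_ac)
    also have "\<dots> = (\<Sum>w\<in>UNIV. of_int (mob b0 w) * (- (1 - y) + 1) ^ rk w)"
      by (simp only: binomial_ring sum_distrib_left)
    also have "\<dots> = (\<Sum>w\<in>UNIV. of_int (mob b0 w) * y ^ rk w)"
      by simp
    finally show ?thesis .
  qed
  have rhs: "y ^ rk b1 * poly (char_poly b0 b1 rk) (1 / y) = (\<Sum>w\<in>UNIV. of_int (mob b0 w) * y ^ rk w)"
    if "y \<noteq> 0" for y :: rat
  proof -
    have "y ^ rk b1 * poly (char_poly b0 b1 rk) (1 / y) = (\<Sum>w\<in>UNIV. of_int (mob b0 w) * (y ^ rk b1 * (1 / y) ^ (rk b1 - rk w)))"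
      unfolding char_poly_def mobius_eq poly_sum poly_monom sum_distrib_left
      by (intro sum.cong refl) (simp only: mult_ac)
    also have "\<dots> = (\<Sum>w\<in>UNIV. of_int (mob b0 w) * y ^ rk w)"
    proof (rule sum.cong[OF refl])
      fix w
      have le: "rk w \<le> rk b1" using mono_le assms(2) by blast
      have "y ^ rk b1 = y ^ rk w * y ^ (rk b1 - rk w)" using le by (simp add: power_add[symmetric])
      then have "y ^ rk b1 * (1 / y) ^ (rk b1 - rk w) = y ^ rk w"
        using that by (simp add: power_one_over field_simps)
      then show "of_int (mob b0 w) * (y ^ rk b1 * (1 / y) ^ (rk b1 - rk w)) = of_int (mob b0 w) * y ^ rk w" by simp
    qed
    finally show ?thesis .
  qed
  show ?thesis
    using cZ rhs pZ0 mZ qZ by simp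
qed

end
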